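(* For every non-negative integer vector ${\bf v}=(v_1,\dots,v_{n+1})$ we have $f_{\bf v}(t)\le F_{\bf v}(t)$ for all $t\ge0$, with equality for all $t\ge 0$ if ${\bf v}$ is GMS.
   Context: Binomial convention: $\binom{a}{k}=0$ if $a<k$. $f_{\bf v}(t)=\sum_{i=0}^{n}\binom{\min(t-i+1,v_{i+1})}{1}$, $F_{\bf v}(t)=\min_{0\le i\le n+1}\big(\binom{t+2}{2}-\binom{t-i+2}{2}+\sum_{j=i+1}^{n+1}v_j\big)$. A non-negative, non-increasing integer vector ${\bf v}$ is GMS if $v_i-v_j\ge j-i-1$ for all $i<j$. *)

theory Defs
  imports Main
begin

definition binomc :: "int \<Rightarrow> nat \<Rightarrow> int" where
  "binomc a k = (if a < int k then 0 else int (nat a choose k))"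

text \<open>The vector v = (v_1,...,v_{n+1}) is the function v restricted to indices 1..n+1.\<close>
definition f_v :: "nat \<Rightarrow> (nat \<Rightarrow> nat) \<Rightarrow> int \<Rightarrow> int" where
  "f_v n v t = (\<Sum>i=0..n. binomc (min (t - int i + 1) (int (v (i+1)))) 1)"

definition F_v :: "nat \<Rightarrow> (nat \<Rightarrow> nat) \<Rightarrow> int \<Rightarrow> int" where
  "F_v n v t = Min ((\<lambda>i. binomc (t + 2) 2 - binomc (t - int i + 2) 2
                       + (\<Sum>j=i+1..n+1. int (v j))) ` {0..n+1})"

text \<open>GMS: non-increasing (non-negativity is automatic for nat entries) and
  v_i - v_j >= j - i - 1 for all 1 <= i < j <= n+1.\<close>
definition GMS :: "nat \<Rightarrow> (nat \<Rightarrow> nat) \<Rightarrow> bool" where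
  "GMS n v \<longleftrightarrow> (\<forall>i j. 1 \<le> i \<and> i < j \<and> j \<le> n + 1 \<longrightarrow>
      v j \<le> v i \<and> int (v i) - int (v j) \<ge> int j - int i - 1)"

end

theory Submission
  imports Defs
begin

lemma b1: "binomc a 1 = max a 0"
  by (simp add: binomc_def)

lemma b2: "binomc a 2 = int (nat a choose 2)"
proof (cases "a < 2")
  case True
  then have "nat a < 2" by simp
  then show ?thesis by (simp add: binomc_def binomial_eq_0)
qed (simp add: binomc_def)

lemma b2step: "binomc (a+1) 2 - binomc a 2 = max a 0"
proof (cases "a \<ge> 0")
  case True
  then have "nat (a+1) = Suc (nat a)" by simp
  then have "nat (a+1) choose 2 = (nat a choose 2) + nat a"
    by (simp add: numeral_2_eq_2)
  then show ?thesis using True by (simp add: b2)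
next
  case False
  then show ?thesis by (simp add: b2)
qed

lemma bdiff: "binomc (t+2) 2 - binomc (t - int i + 2) 2 = (\<Sum>k<i. max (t + 1 - int k) 0)"
proof (induction i)
  case 0 then show ?case by simp
next
  case (Suc i)
  have "binomc (t - int i + 2) 2 - binomc (t - int (Suc i) + 2) 2 = max (t + 1 - int i) 0"
    using b2step[of "t - int (Suc i) + 2"] by (simp add: algebra_simps)
  then show ?case using Suc by simp
qed

lemma Fterm: "binomc (t + 2) 2 - binomc (t - int i + 2) 2 + (\<Sum>j=i+1..n+1. int (v j))
   = (\<Sum>k<i. max (t + 1 - int k) 0) + (\<Sum>k=i..n. int (v (k+1)))"
  using bdiff[of t i] sum.shift_bounds_cl_Suc_ivl[of "\<lambda>j. int (v j)" i n] by simp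

lemma fform: "f_v n v t = (\<Sum>k=0..n. max (min (t + 1 - int k) (int (v (k+1)))) 0)"
  unfolding f_v_def b1 by (simp add: algebra_simps)

lemma split_sum: "i \<le> n+1 \<Longrightarrow> (\<Sum>k=0..n. g (k::nat)) = (\<Sum>k<i. g k) + (\<Sum>k=i..n. (g k::int))"
proof -
  assume "i \<le> n+1"
  then have "{0..n} = {..<i} \<union> {i..n}" by auto
  moreover have "{..<i} \<inter> {i..n} = {}" by auto
  ultimately show ?thesis by (simp add: sum.union_disjoint)
qed

lemma f_le: "i \<le> n+1 \<Longrightarrow> f_v n v t \<le> (\<Sum>k<i. max (t + 1 - int k) 0) + (\<Sum>k=i..n. int (v (k+1)))"
  unfolding fform
  apply (subst split_sum[of i n], assumption)
  apply (rule add_mono)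
   apply (rule sum_mono, simp)
  apply (rule sum_mono, simp)
  done

lemma F_eq: "F_v n v t = Min ((\<lambda>i. (\<Sum>k<i. max (t + 1 - int k) 0) + (\<Sum>k=i..n. int (v (k+1)))) ` {0..n+1})"
  unfolding F_v_def Fterm ..

theorem mainTheorem12:
  fixes n :: nat and v :: "nat \<Rightarrow> nat"
  shows "(\<forall>t::int. t \<ge> 0 \<longrightarrow> f_v n v t \<le> F_v n v t)
         \<and> (GMS n v \<longrightarrow> (\<forall>t::int. t \<ge> 0 \<longrightarrow> f_v n v t = F_v n v t))"
proof -
  have le: "f_v n v t \<le> F_v n v t" for t
  proof -
    let ?S = "(\<lambda>i. (\<Sum>k<i. max (t + 1 - int k) 0) + (\<Sum>k=i..n. int (v (k+1))))"
    have "F_v n v t \<in> ?S ` {0..n+1}" unfolding F_eq by (rule Min_in) auto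
    then obtain i where "i \<le> n+1" "F_v n v t = ?S i" by auto
    then show ?thesis using f_le by simp
  qed
  have eq: "f_v n v t = F_v n v t" if G: "GMS n v" for t
  proof -
    let ?S = "(\<lambda>i. (\<Sum>k<i. max (t + 1 - int k) 0) + (\<Sum>k=i..n. int (v (k+1))))"
    let ?g = "\<lambda>k. int (v (k+1)) - (t + 1 - int k)"
    have gstep: "?g j \<le> ?g k + 1" if "k < j" "j \<le> n" for j k
      using G that unfolding GMS_def
      by (smt (verit, ccfv_SIG) Suc_eq_plus1 Suc_le_mono le_add2 of_nat_add of_nat_less_iff)
    define P where "P k \<longleftrightarrow> k \<le> n \<and> ?g k < 0" for k
    define i where "i = (if \<exists>k. P k then (LEAST k. P k) else n+1)"
    have i_le: "i \<le> n+1"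
      by (auto simp: i_def P_def intro: LeastI2_wellorder)
    have below: "?g k \<ge> 0" if "k < i" for k
    proof (rule ccontr)
      assume "\<not> ?g k \<ge> 0"
      moreover have "k \<le> n" using that i_le by simp
      ultimately have "P k" by (simp add: P_def)
      then have "i \<le> k" unfolding i_def by (auto intro: Least_le)
      then show False using that by simp
    qed
    have above: "?g k \<le> 0" if "i \<le> k" "k \<le> n" for k
    proof -
      have ex: "\<exists>k. P k" using that i_le unfolding i_def by (auto split: if_splits)
      then have Pi: "P i" unfolding i_def by (simp add: LeastI_ex)
      show ?thesis
      proof (cases "k = i")
        case True then show ?thesis using Pi P_def by simp
      next
        case False
        then have "?g k \<le> ?g i + 1" using gstep[of i k] that by simp
        then show ?thesis using Pi P_def by simp
      qed
    qed
    have "f_v n v t = ?S i"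
      unfolding fform
      apply (subst split_sum[OF i_le])
      apply (rule arg_cong2[where f="(+)"])
       apply (rule sum.cong, simp)
      using below apply (simp add: max_def min_def)
      apply (rule sum.cong, simp)
      subgoal for x using above[of x] by (auto simp: max_def min_def)
      done
    moreover have "F_v n v t \<le> ?S i" unfolding F_eq using i_le by (intro Min_le) auto
    ultimately show ?thesis using le[of t] by simp
  qed
  show ?thesis using le eq by blast
qed

end
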